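(* Let $\mathbb{K}=(G,M,I)$ be a finite formal context with concept lattice $\underline{\mathfrak{B}}(\mathbb{K})$ and let $\underline{S}$ be an interval of $\underline{\mathfrak{B}}(\mathbb{K})$ with $|\underline{S}|=1$, say $\underline{S}=\{s\}=[s,s]$. Then $\underline{S}$ is dismantling for $\underline{\mathfrak{B}}(\mathbb{K})$ if and only if $s$ is doubly irreducible in $\underline{\mathfrak{B}}(\mathbb{K})$.
   Context: For $u\le v$ in a lattice $L$, $[u,v]=\{x\mid u\le x\le v\}$, $(v]=\{x\mid x\le v\}$, $[u)=\{x\mid u\le x\}$. An interval $[u,v]$ of $L$ is quasi-dismantling for $L$ if $u$ is supremum-prime in $(v]$ (for all $x,y\in(v]$, $u\le x\vee y$ implies $u\le x$ or $u\le y$) and $v$ is infimum-prime in $[u)$ (for all $x,y\in[u)$, $x\wedge y\le v$ implies $x\le v$ or $y\le v$); it is dismantling for $L$ if moreover $u\neq\bot$ and $v\neq\top$. An element $c$ of a finite lattice is supremum-irreducible if it has exactly one lower neighbor, infimum-irreducible if it has exactly one upper neighbor, and doubly irreducible if both hold. The concept lattice $\underline{\mathfrak{B}}(\mathbb{K})$ is the set of formal concepts $(A,B)$ ($A\subseteq G$, $B\subseteq M$, $A'=B$, $B'=A$ with the usual derivation operators) ordered by inclusion of extents. *)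

theory Defs
  imports Main
begin

definition ctx_intent :: "'g set \<Rightarrow> 'm set \<Rightarrow> ('g \<times> 'm) set \<Rightarrow> 'g set \<Rightarrow> 'm set" where
  "ctx_intent G M I A = {m \<in> M. \<forall>g\<in>A. (g, m) \<in> I}"

definition ctx_extent :: "'g set \<Rightarrow> 'm set \<Rightarrow> ('g \<times> 'm) set \<Rightarrow> 'm set \<Rightarrow> 'g set" where
  "ctx_extent G M I B = {g \<in> G. \<forall>m\<in>B. (g, m) \<in> I}"

definition concepts :: "'g set \<Rightarrow> 'm set \<Rightarrow> ('g \<times> 'm) set \<Rightarrow> ('g set \<times> 'm set) set" where
  "concepts G M I = {(A, B). A \<subseteq> G \<and> B \<subseteq> M \<and> ctx_intent G M I A = B \<and> ctx_extent G M I B = A}"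

definition concept_le :: "('g set \<times> 'm set) \<Rightarrow> ('g set \<times> 'm set) \<Rightarrow> bool" where
  "concept_le c d = (fst c \<subseteq> fst d)"

definition is_lub :: "'a set \<Rightarrow> ('a \<Rightarrow> 'a \<Rightarrow> bool) \<Rightarrow> 'a \<Rightarrow> 'a \<Rightarrow> 'a \<Rightarrow> bool" where
  "is_lub L le x y z = (z \<in> L \<and> le x z \<and> le y z \<and> (\<forall>w\<in>L. le x w \<and> le y w \<longrightarrow> le z w))"

definition is_glb :: "'a set \<Rightarrow> ('a \<Rightarrow> 'a \<Rightarrow> bool) \<Rightarrow> 'a \<Rightarrow> 'a \<Rightarrow> 'a \<Rightarrow> bool" where
  "is_glb L le x y z = (z \<in> L \<and> le z x \<and> le z y \<and> (\<forall>w\<in>L. le w x \<and> le w y \<longrightarrow> le w z))"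

definition lat_sup :: "'a set \<Rightarrow> ('a \<Rightarrow> 'a \<Rightarrow> bool) \<Rightarrow> 'a \<Rightarrow> 'a \<Rightarrow> 'a" where
  "lat_sup L le x y = (THE z. is_lub L le x y z)"

definition lat_inf :: "'a set \<Rightarrow> ('a \<Rightarrow> 'a \<Rightarrow> bool) \<Rightarrow> 'a \<Rightarrow> 'a \<Rightarrow> 'a" where
  "lat_inf L le x y = (THE z. is_glb L le x y z)"

definition lat_bot :: "'a set \<Rightarrow> ('a \<Rightarrow> 'a \<Rightarrow> bool) \<Rightarrow> 'a" where
  "lat_bot L le = (THE z. z \<in> L \<and> (\<forall>x\<in>L. le z x))"

definition lat_top :: "'a set \<Rightarrow> ('a \<Rightarrow> 'a \<Rightarrow> bool) \<Rightarrow> 'a" where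
  "lat_top L le = (THE z. z \<in> L \<and> (\<forall>x\<in>L. le x z))"

definition lat_interval :: "'a set \<Rightarrow> ('a \<Rightarrow> 'a \<Rightarrow> bool) \<Rightarrow> 'a \<Rightarrow> 'a \<Rightarrow> 'a set" where
  "lat_interval L le u v = {x \<in> L. le u x \<and> le x v}"

definition sup_prime_in_down :: "'a set \<Rightarrow> ('a \<Rightarrow> 'a \<Rightarrow> bool) \<Rightarrow> 'a \<Rightarrow> 'a \<Rightarrow> bool" where
  "sup_prime_in_down L le u v = (\<forall>x\<in>L. \<forall>y\<in>L. le x v \<longrightarrow> le y v \<longrightarrow>
      le u (lat_sup L le x y) \<longrightarrow> le u x \<or> le u y)"

definition inf_prime_in_up :: "'a set \<Rightarrow> ('a \<Rightarrow> 'a \<Rightarrow> bool) \<Rightarrow> 'a \<Rightarrow> 'a \<Rightarrow> bool" where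
  "inf_prime_in_up L le u v = (\<forall>x\<in>L. \<forall>y\<in>L. le u x \<longrightarrow> le u y \<longrightarrow>
      le (lat_inf L le x y) v \<longrightarrow> le x v \<or> le y v)"

definition quasi_dismantling :: "'a set \<Rightarrow> ('a \<Rightarrow> 'a \<Rightarrow> bool) \<Rightarrow> 'a \<Rightarrow> 'a \<Rightarrow> bool" where
  "quasi_dismantling L le u v = (sup_prime_in_down L le u v \<and> inf_prime_in_up L le u v)"

definition dismantling :: "'a set \<Rightarrow> ('a \<Rightarrow> 'a \<Rightarrow> bool) \<Rightarrow> 'a \<Rightarrow> 'a \<Rightarrow> bool" where
  "dismantling L le u v = (quasi_dismantling L le u v \<and> u \<noteq> lat_bot L le \<and> v \<noteq> lat_top L le)"

definition lower_neighbors :: "'a set \<Rightarrow> ('a \<Rightarrow> 'a \<Rightarrow> bool) \<Rightarrow> 'a \<Rightarrow> 'a set" where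
  "lower_neighbors L le c = {x \<in> L. le x c \<and> x \<noteq> c \<and>
      \<not> (\<exists>z\<in>L. le x z \<and> z \<noteq> x \<and> le z c \<and> z \<noteq> c)}"

definition upper_neighbors :: "'a set \<Rightarrow> ('a \<Rightarrow> 'a \<Rightarrow> bool) \<Rightarrow> 'a \<Rightarrow> 'a set" where
  "upper_neighbors L le c = {x \<in> L. le c x \<and> x \<noteq> c \<and>
      \<not> (\<exists>z\<in>L. le c z \<and> z \<noteq> c \<and> le z x \<and> z \<noteq> x)}"

definition sup_irreducible :: "'a set \<Rightarrow> ('a \<Rightarrow> 'a \<Rightarrow> bool) \<Rightarrow> 'a \<Rightarrow> bool" where
  "sup_irreducible L le c = (card (lower_neighbors L le c) = 1)"

definition inf_irreducible :: "'a set \<Rightarrow> ('a \<Rightarrow> 'a \<Rightarrow> bool) \<Rightarrow> 'a \<Rightarrow> bool" where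
  "inf_irreducible L le c = (card (upper_neighbors L le c) = 1)"

definition doubly_irreducible :: "'a set \<Rightarrow> ('a \<Rightarrow> 'a \<Rightarrow> bool) \<Rightarrow> 'a \<Rightarrow> bool" where
  "doubly_irreducible L le c = (sup_irreducible L le c \<and> inf_irreducible L le c)"

end

theory Submission
  imports Defs
begin

definition po :: "'a set \<Rightarrow> ('a \<Rightarrow> 'a \<Rightarrow> bool) \<Rightarrow> bool" where
  "po L le = ((\<forall>x\<in>L. le x x) \<and> (\<forall>x\<in>L. \<forall>y\<in>L. le x y \<longrightarrow> le y x \<longrightarrow> x = y)
     \<and> (\<forall>x\<in>L. \<forall>y\<in>L. \<forall>z\<in>L. le x y \<longrightarrow> le y z \<longrightarrow> le x z))"

lemma poR: "po L le \<Longrightarrow> x \<in> L \<Longrightarrow> le x x" unfolding po_def by blast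
lemma poA: "po L le \<Longrightarrow> x \<in> L \<Longrightarrow> y \<in> L \<Longrightarrow> le x y \<Longrightarrow> le y x \<Longrightarrow> x = y"
  unfolding po_def by blast
lemma poT: "po L le \<Longrightarrow> x \<in> L \<Longrightarrow> y \<in> L \<Longrightarrow> z \<in> L \<Longrightarrow> le x y \<Longrightarrow> le y z \<Longrightarrow> le x z"
  unfolding po_def by blast

lemma below_lower_nb:
  assumes fin: "finite L" and po: "po L le" and x: "x \<in> L" and s: "s \<in> L"
    and xs: "le x s" and ne: "x \<noteq> s"
  shows "\<exists>l\<in>lower_neighbors L le s. le x l"
proof -
  define S where "S = {z\<in>L. le x z \<and> le z s \<and> z \<noteq> s}"
  define up where "up z = {w\<in>L. le z w}" for z
  have "x \<in> S" using x xs ne poR[OF po x] unfolding S_def by auto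
  then obtain z where zS: "z \<in> S" and zmin: "\<And>y. y \<in> S \<Longrightarrow> card (up z) \<le> card (up y)"
    using ex_has_least_nat[of "\<lambda>z. z \<in> S" x "\<lambda>z. card (up z)"] by blast
  have "z \<in> lower_neighbors L le s"
  proof -
    have "\<not> (\<exists>w\<in>L. le z w \<and> w \<noteq> z \<and> le w s \<and> w \<noteq> s)"
    proof
      assume "\<exists>w\<in>L. le z w \<and> w \<noteq> z \<and> le w s \<and> w \<noteq> s"
      then obtain w where w: "w \<in> L" "le z w" "w \<noteq> z" "le w s" "w \<noteq> s" by blast
      have wS: "w \<in> S" using w zS x poT[OF po, of x z w] unfolding S_def by auto
      have sub: "up w \<subseteq> up z" unfolding up_def using w zS poT[OF po, of z w] unfolding S_def by auto
      have "z \<in> up z" "z \<notin> up w" unfolding up_def using w zS poR[OF po, of z] poA[OF po, of z w] unfolding S_def by auto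
      then have "up w \<subset> up z" using sub by blast
      moreover have "finite (up z)" using fin unfolding up_def by auto
      ultimately have "card (up w) < card (up z)" by (simp add: psubset_card_mono)
      with zmin[OF wS] show False by simp
    qed
    then show ?thesis using zS unfolding S_def lower_neighbors_def by blast
  qed
  then show ?thesis using zS unfolding S_def by blast
qed

lemma lnbD: "l \<in> lower_neighbors L le s \<Longrightarrow> z \<in> L \<Longrightarrow> le l z \<Longrightarrow> le z s \<Longrightarrow> z \<noteq> s \<Longrightarrow> z = l"
  unfolding lower_neighbors_def by blast
lemma lnbD1: "l \<in> lower_neighbors L le s \<Longrightarrow> l \<in> L \<and> le l s \<and> l \<noteq> s"
  unfolding lower_neighbors_def by blast

lemma lub_the:
  assumes po: "po L le" and ex: "is_lub L le x y z"
  shows "is_lub L le x y (lat_sup L le x y)"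
proof -
  have "\<And>w. is_lub L le x y w \<Longrightarrow> w = z"
    using ex poA[OF po] unfolding is_lub_def by blast
  then show ?thesis unfolding lat_sup_def using ex theI[of "is_lub L le x y" z] by blast
qed

lemma bot_the:
  assumes po: "po L le" and b: "b \<in> L" "\<forall>x\<in>L. le b x"
  shows "lat_bot L le = b"
proof -
  have "\<And>w. w \<in> L \<and> (\<forall>x\<in>L. le w x) \<Longrightarrow> w = b"
    using b poA[OF po] by blast
  then show ?thesis unfolding lat_bot_def using b the_equality[of "\<lambda>z. z \<in> L \<and> (\<forall>x\<in>L. le z x)" b] by blast
qed

lemma one_sided:
  assumes fin: "finite L" and po: "po L le"
    and lub: "\<forall>x\<in>L. \<forall>y\<in>L. \<exists>z. is_lub L le x y z"
    and glb: "\<forall>x\<in>L. \<forall>y\<in>L. \<exists>z. is_glb L le x y z"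
    and bot: "\<exists>b\<in>L. \<forall>x\<in>L. le b x"
    and s: "s \<in> L"
  shows "(sup_prime_in_down L le s s \<and> s \<noteq> lat_bot L le) \<longleftrightarrow> sup_irreducible L le s"
proof -
  obtain b where b: "b \<in> L" "\<forall>x\<in>L. le b x" using bot by blast
  have botb: "lat_bot L le = b" using bot_the[OF po b] .
  have finN: "finite (lower_neighbors L le s)" using fin unfolding lower_neighbors_def by auto
  have sup: "is_lub L le x y (lat_sup L le x y)" if "x \<in> L" "y \<in> L" for x y
    using lub that lub_the[OF po] by blast
  show ?thesis
  proof
    assume A: "sup_prime_in_down L le s s \<and> s \<noteq> lat_bot L le"
    have nonempty: "lower_neighbors L le s \<noteq> {}"
    proof
      assume E: "lower_neighbors L le s = {}"
      have "\<forall>x\<in>L. le s x"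
      proof
        fix x assume x: "x \<in> L"
        obtain g where g: "is_glb L le s x g" using glb s x by blast
        have gL: "g \<in> L" "le g s" "le g x" using g unfolding is_glb_def by auto
        have "g = s"
        proof (rule ccontr)
          assume "g \<noteq> s"
          from below_lower_nb[OF fin po gL(1) s gL(2) this] E show False by blast
        qed
        then show "le s x" using gL by simp
      qed
      then have "lat_bot L le = s" using bot_the[OF po s] by blast
      with A show False by simp
    qed
    have uniq: "a = c" if a: "a \<in> lower_neighbors L le s" and c: "c \<in> lower_neighbors L le s" for a c
    proof (rule ccontr)
      assume ac: "a \<noteq> c"
      have aL: "a \<in> L" "le a s" "a \<noteq> s" and cL: "c \<in> L" "le c s" "c \<noteq> s"
        using lnbD1[OF a] lnbD1[OF c] by auto
      define j where "j = lat_sup L le a c"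
      have j: "j \<in> L" "le a j" "le c j" "le j s"
        using sup[OF aL(1) cL(1)] s aL cL unfolding j_def is_lub_def by auto
      have "j \<noteq> a"
      proof
        assume "j = a"
        then have "le c a" using j by simp
        then show False using lnbD[OF c aL(1)] aL ac by blast
      qed
      then have "j = s" using lnbD[OF a j(1) j(2) j(4)] by blast
      then have "le s (lat_sup L le a c)" using poR[OF po s] unfolding j_def by simp
      moreover have "sup_prime_in_down L le s s" using A by simp
      ultimately have "le s a \<or> le s c" using aL cL unfolding sup_prime_in_down_def by blast
      then show False using poA[OF po, of s a] poA[OF po, of s c] aL cL s by auto
    qed
    obtain a where "a \<in> lower_neighbors L le s" using nonempty by blast
    then have "lower_neighbors L le s = {a}" using uniq by blast
    then show "sup_irreducible L le s" unfolding sup_irreducible_def by simp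
  next
    assume B: "sup_irreducible L le s"
    then obtain l where l: "lower_neighbors L le s = {l}"
      unfolding sup_irreducible_def by (metis card_1_singletonE)
    have lL: "l \<in> L" "le l s" "l \<noteq> s" using lnbD1[of l L le s] l by auto
    have nb: "s \<noteq> lat_bot L le"
    proof
      assume "s = lat_bot L le"
      then have "le s l" using botb b lL by simp
      then show False using poA[OF po, of s l] lL s by auto
    qed
    have "sup_prime_in_down L le s s"
      unfolding sup_prime_in_down_def
    proof (intro ballI impI)
      fix x y assume x: "x \<in> L" and y: "y \<in> L" and xs: "le x s" and ys: "le y s"
        and sj: "le s (lat_sup L le x y)"
      show "le s x \<or> le s y"
      proof (rule ccontr)
        assume N: "\<not> (le s x \<or> le s y)"
        then have "x \<noteq> s" "y \<noteq> s" using poR[OF po s] by auto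
        then have "le x l" "le y l"
          using below_lower_nb[OF fin po x s xs] below_lower_nb[OF fin po y s ys] l by auto
        then have "le (lat_sup L le x y) l" using sup[OF x y] lL unfolding is_lub_def by blast
        then have "le s l" using sj s lL sup[OF x y] poT[OF po, of s "lat_sup L le x y" l] unfolding is_lub_def by blast
        then show False using poA[OF po, of s l] lL s by auto
      qed
    qed
    then show "sup_prime_in_down L le s s \<and> s \<noteq> lat_bot L le" using nb by simp
  qed
qed

lemma abstract_main:
  assumes fin: "finite L" and po: "po L le"
    and lub: "\<forall>x\<in>L. \<forall>y\<in>L. \<exists>z. is_lub L le x y z"
    and glb: "\<forall>x\<in>L. \<forall>y\<in>L. \<exists>z. is_glb L le x y z"
    and bot: "\<exists>b\<in>L. \<forall>x\<in>L. le b x"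
    and top: "\<exists>b\<in>L. \<forall>x\<in>L. le x b"
    and s: "s \<in> L"
  shows "dismantling L le s s \<longleftrightarrow> doubly_irreducible L le s"
proof -
  define le' where "le' = (\<lambda>x y. le y x)"
  have po': "po L le'" using po unfolding po_def le'_def by blast
  have ilub: "is_lub L le' = is_glb L le" unfolding le'_def is_lub_def is_glb_def by (intro ext) blast
  have iglb: "is_glb L le' = is_lub L le" unfolding le'_def is_lub_def is_glb_def by (intro ext) blast
  have lsup: "lat_sup L le' = lat_inf L le" unfolding lat_sup_def lat_inf_def ilub ..
  have lbot: "lat_bot L le' = lat_top L le" unfolding lat_bot_def lat_top_def le'_def ..
  have lnb: "lower_neighbors L le' s = upper_neighbors L le s"
    unfolding lower_neighbors_def upper_neighbors_def le'_def by blast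
  have sp: "sup_prime_in_down L le' s s = inf_prime_in_up L le s s"
    unfolding sup_prime_in_down_def inf_prime_in_up_def lsup unfolding le'_def by blast
  have si: "sup_irreducible L le' s = inf_irreducible L le s"
    unfolding sup_irreducible_def inf_irreducible_def lnb ..
  have D: "(inf_prime_in_up L le s s \<and> s \<noteq> lat_top L le) \<longleftrightarrow> inf_irreducible L le s"
  proof -
    have t': "\<exists>b\<in>L. \<forall>x\<in>L. le' b x" using top unfolding le'_def by blast
    have "(sup_prime_in_down L le' s s \<and> s \<noteq> lat_bot L le') \<longleftrightarrow> sup_irreducible L le' s"
      by (rule one_sided[OF fin po']) (use glb lub t' s in \<open>simp_all add: ilub iglb\<close>)
    then show ?thesis unfolding sp si lbot .
  qed
  have U: "(sup_prime_in_down L le s s \<and> s \<noteq> lat_bot L le) \<longleftrightarrow> sup_irreducible L le s"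
    using one_sided[OF fin po lub glb bot s] .
  show ?thesis using U D unfolding dismantling_def quasi_dismantling_def doubly_irreducible_def
    by blast
qed


lemma ext_sub: "ctx_extent G M I B \<subseteq> G" unfolding ctx_extent_def by auto
lemma int_sub: "ctx_intent G M I A \<subseteq> M" unfolding ctx_intent_def by auto
lemma ext_int_incr: "A \<subseteq> G \<Longrightarrow> A \<subseteq> ctx_extent G M I (ctx_intent G M I A)"
  unfolding ctx_extent_def ctx_intent_def by auto
lemma int_ext_incr: "B \<subseteq> M \<Longrightarrow> B \<subseteq> ctx_intent G M I (ctx_extent G M I B)"
  unfolding ctx_extent_def ctx_intent_def by auto
lemma int_anti: "A \<subseteq> A' \<Longrightarrow> ctx_intent G M I A' \<subseteq> ctx_intent G M I A"
  unfolding ctx_intent_def by auto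
lemma ext_anti: "B \<subseteq> B' \<Longrightarrow> ctx_extent G M I B' \<subseteq> ctx_extent G M I B"
  unfolding ctx_extent_def by auto
lemma int3: "A \<subseteq> G \<Longrightarrow> ctx_intent G M I (ctx_extent G M I (ctx_intent G M I A)) = ctx_intent G M I A"
  by (meson ext_int_incr int_anti int_ext_incr int_sub subset_antisym)
lemma ext3: "B \<subseteq> M \<Longrightarrow> ctx_extent G M I (ctx_intent G M I (ctx_extent G M I B)) = ctx_extent G M I B"
  by (meson int_ext_incr ext_anti ext_int_incr ext_sub subset_antisym)
lemma concept_of_ext: "B \<subseteq> M \<Longrightarrow> (ctx_extent G M I B, ctx_intent G M I (ctx_extent G M I B)) \<in> concepts G M I"
  unfolding concepts_def using ext3[of B M G I] ext_sub[of G M I] int_sub[of G M I] by auto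
lemma concept_of_int: "A \<subseteq> G \<Longrightarrow> (ctx_extent G M I (ctx_intent G M I A), ctx_intent G M I A) \<in> concepts G M I"
  unfolding concepts_def using int3[of A G M I] ext_sub[of G M I] int_sub[of G M I] by auto
lemma conceptD: "c \<in> concepts G M I \<Longrightarrow> fst c \<subseteq> G \<and> snd c \<subseteq> M \<and>
   ctx_intent G M I (fst c) = snd c \<and> ctx_extent G M I (snd c) = fst c"
  unfolding concepts_def by auto
lemma ext_union: "ctx_extent G M I (B1 \<union> B2) = ctx_extent G M I B1 \<inter> ctx_extent G M I B2"
  unfolding ctx_extent_def by auto

lemma concept_lattice:
  assumes "finite G" "finite M"
  shows "finite (concepts G M I)" "po (concepts G M I) concept_le"
    "\<forall>x\<in>concepts G M I. \<forall>y\<in>concepts G M I. \<exists>z. is_lub (concepts G M I) concept_le x y z"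
    "\<forall>x\<in>concepts G M I. \<forall>y\<in>concepts G M I. \<exists>z. is_glb (concepts G M I) concept_le x y z"
    "\<exists>b\<in>concepts G M I. \<forall>x\<in>concepts G M I. concept_le b x"
    "\<exists>b\<in>concepts G M I. \<forall>x\<in>concepts G M I. concept_le x b"
proof -
  have "concepts G M I \<subseteq> Pow G \<times> Pow M" unfolding concepts_def by auto
  then show "finite (concepts G M I)" by (rule finite_subset) (use assms in auto)
  have anti: "x = y" if "x \<in> concepts G M I" "y \<in> concepts G M I" "fst x = fst y" for x y
  proof -
    have "snd x = ctx_intent G M I (fst x)" "snd y = ctx_intent G M I (fst y)"
      using conceptD[OF that(1)] conceptD[OF that(2)] by auto
    then show ?thesis by (simp add: prod_eq_iff that(3))
  qed
  then show "po (concepts G M I) concept_le" unfolding po_def concept_le_def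
    by (intro conjI ballI impI) auto
  show "\<forall>x\<in>concepts G M I. \<forall>y\<in>concepts G M I. \<exists>z. is_lub (concepts G M I) concept_le x y z"
  proof (intro ballI)
    fix x y assume x: "x \<in> concepts G M I" and y: "y \<in> concepts G M I"
    note cx = conceptD[OF x] and cy = conceptD[OF y]
    define U where "U = fst x \<union> fst y"
    have UG: "U \<subseteq> G" using cx cy U_def by auto
    define z where "z = (ctx_extent G M I (ctx_intent G M I U), ctx_intent G M I U)"
    have zc: "z \<in> concepts G M I" unfolding z_def by (rule concept_of_int[OF UG])
    have up: "U \<subseteq> fst z" unfolding z_def using ext_int_incr[OF UG] by simp
    have least: "fst z \<subseteq> fst w" if w: "w \<in> concepts G M I" "U \<subseteq> fst w" for w
    proof -
      have "fst z \<subseteq> ctx_extent G M I (ctx_intent G M I (fst w))"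
        unfolding z_def by (simp add: ext_anti int_anti w(2))
      then show ?thesis using conceptD[OF w(1)] by simp
    qed
    show "\<exists>z. is_lub (concepts G M I) concept_le x y z"
      unfolding is_lub_def concept_le_def using zc up least U_def by (intro exI[of _ z]) auto
  qed
  show "\<forall>x\<in>concepts G M I. \<forall>y\<in>concepts G M I. \<exists>z. is_glb (concepts G M I) concept_le x y z"
  proof (intro ballI)
    fix x y assume x: "x \<in> concepts G M I" and y: "y \<in> concepts G M I"
    note cx = conceptD[OF x] and cy = conceptD[OF y]
    define B where "B = snd x \<union> snd y"
    have BM: "B \<subseteq> M" using cx cy B_def by auto
    define z where "z = (ctx_extent G M I B, ctx_intent G M I (ctx_extent G M I B))"
    have zc: "z \<in> concepts G M I" unfolding z_def by (rule concept_of_ext[OF BM])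
    have fz: "fst z = fst x \<inter> fst y" unfolding z_def B_def ext_union using cx cy by simp
    show "\<exists>z. is_glb (concepts G M I) concept_le x y z"
      unfolding is_glb_def concept_le_def using zc fz by (intro exI[of _ z]) auto
  qed
  show "\<exists>b\<in>concepts G M I. \<forall>x\<in>concepts G M I. concept_le b x"
  proof
    show "(ctx_extent G M I M, ctx_intent G M I (ctx_extent G M I M)) \<in> concepts G M I"
      by (rule concept_of_ext) simp
    show "\<forall>x\<in>concepts G M I. concept_le (ctx_extent G M I M, ctx_intent G M I (ctx_extent G M I M)) x"
    proof
      fix x assume x: "x \<in> concepts G M I"
      note cx = conceptD[OF x]
      have "ctx_extent G M I M \<subseteq> ctx_extent G M I (snd x)" using cx ext_anti[of "snd x" M G M I] by simp
      then show "concept_le (ctx_extent G M I M, ctx_intent G M I (ctx_extent G M I M)) x"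
        unfolding concept_le_def using cx by simp
    qed
  qed
  show "\<exists>b\<in>concepts G M I. \<forall>x\<in>concepts G M I. concept_le x b"
  proof
    show "(ctx_extent G M I (ctx_intent G M I G), ctx_intent G M I G) \<in> concepts G M I"
      by (rule concept_of_int) simp
    show "\<forall>x\<in>concepts G M I. concept_le x (ctx_extent G M I (ctx_intent G M I G), ctx_intent G M I G)"
    proof
      fix x assume x: "x \<in> concepts G M I"
      note cx = conceptD[OF x]
      have "G \<subseteq> ctx_extent G M I (ctx_intent G M I G)" using ext_int_incr[of G G M I] by simp
      then show "concept_le x (ctx_extent G M I (ctx_intent G M I G), ctx_intent G M I G)"
        unfolding concept_le_def using cx by auto
    qed
  qed
qed

theorem proposition2:
  fixes G :: "'g set" and M :: "'m set" and I :: "('g \<times> 'm) set"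
    and u v s :: "'g set \<times> 'm set"
  assumes "finite G" and "finite M" and "I \<subseteq> G \<times> M"
    and "u \<in> concepts G M I" and "v \<in> concepts G M I" and "concept_le u v"
    and "lat_interval (concepts G M I) concept_le u v = {s}"
  shows "dismantling (concepts G M I) concept_le u v \<longleftrightarrow>
         doubly_irreducible (concepts G M I) concept_le s"
proof -
  note CL = concept_lattice[OF assms(1,2), of I]
  have "u \<in> lat_interval (concepts G M I) concept_le u v"
    unfolding lat_interval_def using assms(4,6) by (simp add: concept_le_def)
  then have us: "u = s" using assms(7) by blast
  have "v \<in> lat_interval (concepts G M I) concept_le u v"
    unfolding lat_interval_def using assms(5,6) by (simp add: concept_le_def)
  then have vs: "v = s" using assms(7) by blast
  show ?thesis unfolding us vs
    by (rule abstract_main[OF CL]) (use assms(4) us in simp)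
qed

end
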